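(* Let $X=(-\frac12,\frac12)^{\mathbb N}$ with the product $\sigma$-algebra and the product probability measure $\mu$ generated by Lebesgue measure on $(-\frac12,\frac12)$. Then (1) $\mu(S_0\cap X)=1$, and (2) $\mu(\widehat{c}\cap X)=0$.
   Context: A Banach limit is a linear functional $L\colon\ell^\infty\to\mathbb R$ on the space $\ell^\infty$ of bounded real sequences such that for every $(x_n)\in\ell^\infty$: (1) if $x_n\ge0$ for all $n$ then $L((x_n))\ge0$; (2) $L((x_2,x_3,\dots))=L((x_1,x_2,\dots))$; (3) $L((1,1,\dots))=1$. $\widehat{c}$ is the set of $x\in\ell^\infty$ for which there is $s\in\mathbb R$ with $L(x)=s$ for every Banach limit $L$. $S_0=\{x\in\ell^\infty\colon\lim_n\frac{x_1+\dots+x_n}{n}=0\}$. *)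

theory Defs
  imports "HOL-Probability.Probability"
begin

text \<open>Bounded real sequences (the space l-infinity) are functions nat => real with Bseq.
  Sequences are indexed from 0 instead of 1.\<close>

definition banach_limit :: "((nat \<Rightarrow> real) \<Rightarrow> real) \<Rightarrow> bool" where
  "banach_limit L \<longleftrightarrow>
     (\<forall>x y a b. Bseq x \<longrightarrow> Bseq y \<longrightarrow> L (\<lambda>n. a * x n + b * y n) = a * L x + b * L y) \<and>
     (\<forall>x. Bseq x \<longrightarrow> (\<forall>n. x n \<ge> 0) \<longrightarrow> L x \<ge> 0) \<and>
     (\<forall>x. Bseq x \<longrightarrow> L (\<lambda>n. x (Suc n)) = L x) \<and>
     L (\<lambda>n. 1) = 1"

definition c_hat :: "(nat \<Rightarrow> real) set" where
  "c_hat = {x. Bseq x \<and> (\<exists>s. \<forall>L. banach_limit L \<longrightarrow> L x = s)}"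

definition S0 :: "(nat \<Rightarrow> real) set" where
  "S0 = {x. Bseq x \<and> (\<lambda>n. (\<Sum>i<n. x i) / real n) \<longlonglongrightarrow> 0}"

definition unif_half :: "real measure" where
  "unif_half = restrict_space lborel {-1/2<..<1/2}"

definition mu :: "(nat \<Rightarrow> real) measure" where
  "mu = PiM UNIV (\<lambda>_. unif_half)"

end

theory Submission
  imports Defs
begin

definition pfilt :: "nat set set \<Rightarrow> bool" where
  "pfilt F \<longleftrightarrow> (\<forall>A B. A \<in> F \<longrightarrow> B \<in> F \<longrightarrow> A \<inter> B \<in> F) \<and> (\<forall>A B. A \<in> F \<longrightarrow> A \<subseteq> B \<longrightarrow> B \<in> F)
     \<and> {} \<notin> F \<and> (\<forall>N. {N..} \<in> F)"

lemma pfilt_int: "pfilt F \<Longrightarrow> A \<in> F \<Longrightarrow> B \<in> F \<Longrightarrow> A \<inter> B \<in> F"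
  unfolding pfilt_def by blast
lemma pfilt_mono: "pfilt F \<Longrightarrow> A \<in> F \<Longrightarrow> A \<subseteq> B \<Longrightarrow> B \<in> F"
  unfolding pfilt_def by blast
lemma pfilt_empty: "pfilt F \<Longrightarrow> {} \<notin> F"
  unfolding pfilt_def by blast
lemma pfilt_tail: "pfilt F \<Longrightarrow> {N..} \<in> F"
  unfolding pfilt_def by blast

lemma ex_max_pfilt: "\<exists>U. pfilt U \<and> (\<forall>V. pfilt V \<longrightarrow> U \<subseteq> V \<longrightarrow> V = U)"
proof -
  let ?A = "Collect pfilt"
  have "\<forall>C\<in>chains ?A. \<exists>U\<in>?A. \<forall>X\<in>C. X \<subseteq> U"
  proof
    fix C assume C: "C \<in> chains ?A"
    show "\<exists>U\<in>?A. \<forall>X\<in>C. X \<subseteq> U"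
    proof (cases "C = {}")
      case True
      have "pfilt {A. \<exists>N. {N..} \<subseteq> A}"
        unfolding pfilt_def
      proof (intro conjI allI impI)
        fix A B :: "nat set" assume "A \<in> {A. \<exists>N. {N..} \<subseteq> A}" "B \<in> {A. \<exists>N. {N..} \<subseteq> A}"
        then obtain N M where "{N..} \<subseteq> A" "{M..} \<subseteq> B" by auto
        then have "{max N M..} \<subseteq> A \<inter> B" by auto
        then show "A \<inter> B \<in> {A. \<exists>N. {N..} \<subseteq> A}" by blast
      qed auto
      then show ?thesis using True by blast
    next
      case False
      have ch: "\<forall>X\<in>C. \<forall>Y\<in>C. X \<subseteq> Y \<or> Y \<subseteq> X" and pf: "\<forall>X\<in>C. pfilt X"
        using C unfolding chains_def chain_subset_def by auto
      have "pfilt (\<Union>C)"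
        unfolding pfilt_def
      proof (intro conjI allI impI)
        fix A B assume "A \<in> \<Union>C" "B \<in> \<Union>C"
        then obtain X Y where XY: "X \<in> C" "Y \<in> C" "A \<in> X" "B \<in> Y" by auto
        have "X \<subseteq> Y \<or> Y \<subseteq> X" using ch XY by blast
        then show "A \<inter> B \<in> \<Union>C"
        proof
          assume "X \<subseteq> Y" then have "A \<inter> B \<in> Y" using XY pf pfilt_int by blast
          then show ?thesis using XY by blast
        next
          assume "Y \<subseteq> X" then have "A \<inter> B \<in> X" using XY pf pfilt_int by blast
          then show ?thesis using XY by blast
        qed
      next
        fix A B assume "A \<in> \<Union>C" "A \<subseteq> B" then show "B \<in> \<Union>C" using pf pfilt_mono by blast
      next
        show "{} \<notin> \<Union>C" using pf pfilt_empty by blast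
      next
        fix N obtain X where "X \<in> C" using False by blast
        then show "{N..} \<in> \<Union>C" using pf pfilt_tail by blast
      qed
      then show ?thesis by blast
    qed
  qed
  from Zorn_Lemma2[OF this] show ?thesis by blast
qed

lemma max_pfilt_ultra:
  assumes U: "pfilt U" and mx: "\<forall>V. pfilt V \<longrightarrow> U \<subseteq> V \<longrightarrow> V = U"
  shows "A \<in> U \<or> - A \<in> U"
proof (cases "\<exists>B\<in>U. B \<inter> A = {}")
  case True
  then obtain B where "B \<in> U" "B \<subseteq> - A" by auto
  then show ?thesis using U pfilt_mono by blast
next
  case False
  let ?V = "{C. \<exists>B\<in>U. B \<inter> A \<subseteq> C}"
  have "pfilt ?V" unfolding pfilt_def
  proof (intro conjI allI impI)
    fix C D assume "C \<in> ?V" "D \<in> ?V"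
    then obtain B1 B2 where "B1 \<in> U" "B2 \<in> U" "B1 \<inter> A \<subseteq> C" "B2 \<inter> A \<subseteq> D" by auto
    moreover have "B1 \<inter> B2 \<in> U" using U \<open>B1 \<in> U\<close> \<open>B2 \<in> U\<close> by (rule pfilt_int)
    ultimately show "C \<inter> D \<in> ?V" by blast
  next
    fix C D assume "C \<in> ?V" "C \<subseteq> D" then show "D \<in> ?V" by blast
  next
    show "{} \<notin> ?V" using False by auto
  next
    fix N show "{N..} \<in> ?V" using pfilt_tail[OF U] by blast
  qed
  moreover have "U \<subseteq> ?V" by blast
  ultimately have "?V = U" using mx by blast
  moreover have "A \<in> ?V" using pfilt_tail[OF U, of 0] by blast
  ultimately show ?thesis by blast
qed

lemma ex_ultra: "\<exists>F::nat filter. F \<noteq> bot \<and> F \<le> sequentially \<and> (\<forall>P. eventually P F \<or> eventually (\<lambda>x. \<not> P x) F)"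
proof -
  obtain U where U: "pfilt U" and mx: "\<forall>V. pfilt V \<longrightarrow> U \<subseteq> V \<longrightarrow> V = U" using ex_max_pfilt by blast
  have isf: "is_filter (\<lambda>P. {n. P n} \<in> U)"
  proof
    show "{n. True} \<in> U" using pfilt_tail[OF U, of 0] by (simp add: atLeast_0)
  next
    fix P Q assume "{n. P n} \<in> U" "{n. Q n} \<in> U"
    then have "{n. P n} \<inter> {n. Q n} \<in> U" using U pfilt_int by blast
    then show "{n. P n \<and> Q n} \<in> U" by (simp add: Collect_conj_eq)
  next
    fix P Q assume "\<forall>x. P x \<longrightarrow> Q x" "{n. P n} \<in> U"
    then show "{n. Q n} \<in> U" using U pfilt_mono[of U "{n. P n}" "{n. Q n}"] by blast
  qed
  define F where "F = Abs_filter (\<lambda>P. {n. P n} \<in> U)"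
  have ev: "eventually P F \<longleftrightarrow> {n. P n} \<in> U" for P
    unfolding F_def eventually_Abs_filter[OF isf] ..
  have "F \<noteq> bot" using pfilt_empty[OF U] unfolding trivial_limit_def ev by auto
  moreover have "F \<le> sequentially"
    unfolding le_filter_def ev eventually_sequentially
  proof (intro allI impI)
    fix P :: "nat \<Rightarrow> bool" assume "\<exists>N. \<forall>n\<ge>N. P n"
    then obtain N where "{N..} \<subseteq> {n. P n}" by auto
    then show "{n. P n} \<in> U" using U pfilt_mono pfilt_tail by blast
  qed
  moreover have "eventually P F \<or> eventually (\<lambda>x. \<not> P x) F" for P
    using max_pfilt_ultra[OF U mx, of "{n. P n}"] unfolding ev by (simp add: Collect_neg_eq)
  ultimately show ?thesis by blast
qed

lemma ultra_conv:
  fixes f :: "nat \<Rightarrow> real" and F :: "nat filter"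
  assumes Fb: "F \<noteq> bot" and ult: "\<forall>P. eventually P F \<or> eventually (\<lambda>x. \<not> P x) F"
    and bd: "\<And>n. \<bar>f n\<bar> \<le> B"
  shows "\<exists>c. (f \<longlongrightarrow> c) F"
proof -
  have cpt: "compact (cball 0 B :: real set)" by simp
  have "filtermap f F \<noteq> bot" using Fb by (simp add: filtermap_bot_iff)
  moreover have "eventually (\<lambda>x. x \<in> cball 0 B) (filtermap f F)"
    using bd by (simp add: eventually_filtermap)
  ultimately obtain c where c: "inf (nhds c) (filtermap f F) \<noteq> bot"
    using cpt unfolding compact_filter by blast
  have "(f \<longlongrightarrow> c) F"
  proof (rule topological_tendstoI)
    fix S :: "real set" assume S: "open S" "c \<in> S"
    show "eventually (\<lambda>x. f x \<in> S) F"
    proof (rule ccontr)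
      assume "\<not> eventually (\<lambda>x. f x \<in> S) F"
      then have "eventually (\<lambda>x. f x \<notin> S) F" using ult by blast
      then have e2: "eventually (\<lambda>y. y \<notin> S) (filtermap f F)" by (simp add: eventually_filtermap)
      have e1: "eventually (\<lambda>y. y \<in> S) (nhds c)" using S by (rule eventually_nhds_in_open)
      have "eventually (\<lambda>_. False) (inf (nhds c) (filtermap f F))"
        unfolding eventually_inf using e1 e2 by blast
      then show False using c by (simp add: eventually_False)
    qed
  qed
  then show ?thesis by blast
qed

definition avg :: "(nat \<Rightarrow> real) \<Rightarrow> nat \<Rightarrow> nat \<Rightarrow> real" where
  "avg y k m = (\<Sum>i<m. y (k + i)) / real m"

lemma avg_bound:
  assumes "\<And>n. \<bar>y n\<bar> \<le> B" "m > 0"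
  shows "\<bar>avg y k m\<bar> \<le> B"
proof -
  have "\<bar>\<Sum>i<m. y (k + i)\<bar> \<le> (\<Sum>i<m. \<bar>y (k + i)\<bar>)" by (rule sum_abs)
  also have "\<dots> \<le> (\<Sum>i<m. B)" by (intro sum_mono assms(1))
  finally show ?thesis using assms(2) by (simp add: avg_def abs_divide divide_le_eq mult.commute)
qed

lemma avg_lin: "avg (\<lambda>n. a * x n + b * y n) k m = a * avg x k m + b * avg y k m"
  by (simp add: avg_def sum.distrib sum_distrib_left add_divide_distrib)

lemma avg_shift:
  assumes "m > 0"
  shows "avg (\<lambda>n. x (Suc n)) k m - avg x k m = (x (k + m) - x k) / real m"
proof -
  have "(\<Sum>i<m. x (Suc (k + i))) = (\<Sum>i<m. x (k + Suc i))" by simp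
  also have "\<dots> = (\<Sum>i<Suc m. x (k + i)) - x k" by (subst sum.lessThan_Suc_shift) simp
  also have "\<dots> = (\<Sum>i<m. x (k + i)) + x (k + m) - x k" by simp
  finally have eq: "(\<Sum>i<m. x (Suc (k + i))) = (\<Sum>i<m. x (k + i)) + x (k + m) - x k" .
  show ?thesis unfolding avg_def eq using assms by (simp add: field_simps)
qed

lemma Bseq_abs_bound: "Bseq (x :: nat \<Rightarrow> real) \<Longrightarrow> \<exists>B. \<forall>n. \<bar>x n\<bar> \<le> B"
  unfolding Bseq_def by (metis real_norm_def less_imp_le)

lemma Bseq_lin:
  assumes x: "Bseq (x :: nat \<Rightarrow> real)" and y: "Bseq y"
  shows "Bseq (\<lambda>n. a * x n + b * y n)"
proof -
  obtain B1 B2 where B: "\<forall>n. \<bar>x n\<bar> \<le> B1" "\<forall>n. \<bar>y n\<bar> \<le> B2"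
    using Bseq_abs_bound[OF x] Bseq_abs_bound[OF y] by blast
  have "norm (a * x n + b * y n) \<le> \<bar>a\<bar> * B1 + \<bar>b\<bar> * B2" for n
  proof -
    have "\<bar>a * x n\<bar> \<le> \<bar>a\<bar> * B1" using B by (simp add: abs_mult mult_left_mono)
    moreover have "\<bar>b * y n\<bar> \<le> \<bar>b\<bar> * B2" using B by (simp add: abs_mult mult_left_mono)
    ultimately show ?thesis by simp
  qed
  then show ?thesis by (rule BseqI')
qed

definition BL :: "nat filter \<Rightarrow> (nat \<Rightarrow> nat) \<Rightarrow> (nat \<Rightarrow> real) \<Rightarrow> real" where
  "BL F w y = Lim F (\<lambda>p. avg y (w p) (Suc p))"

lemma BL_tendsto:
  assumes Fb: "F \<noteq> bot" and ult: "\<forall>P. eventually P F \<or> eventually (\<lambda>x. \<not> P x) F"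
    and y: "Bseq y"
  shows "((\<lambda>p. avg y (w p) (Suc p)) \<longlongrightarrow> BL F w y) F"
proof -
  obtain B where "\<forall>n. \<bar>y n\<bar> \<le> B" using Bseq_abs_bound[OF y] by blast
  then have "\<And>p. \<bar>avg y (w p) (Suc p)\<bar> \<le> B" by (intro avg_bound) auto
  from ultra_conv[OF Fb ult, of "\<lambda>p. avg y (w p) (Suc p)", OF this] obtain c where "((\<lambda>p. avg y (w p) (Suc p)) \<longlongrightarrow> c) F" by blast
  then show ?thesis unfolding BL_def using Fb by (simp add: tendsto_Lim)
qed

lemma BL_banach:
  assumes Fb: "F \<noteq> bot" and ult: "\<forall>P. eventually P F \<or> eventually (\<lambda>x. \<not> P x) F"
    and Fs: "F \<le> sequentially"
  shows "banach_limit (BL F w)"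
  unfolding banach_limit_def
proof (intro conjI allI impI)
  fix x y :: "nat \<Rightarrow> real" and a b :: real assume x: "Bseq x" and y: "Bseq y"
  have "((\<lambda>p. avg (\<lambda>n. a * x n + b * y n) (w p) (Suc p)) \<longlongrightarrow> a * BL F w x + b * BL F w y) F"
    unfolding avg_lin by (intro tendsto_intros BL_tendsto[OF Fb ult] x y)
  moreover have "Bseq (\<lambda>n. a * x n + b * y n)" using x y by (rule Bseq_lin)
  ultimately show "BL F w (\<lambda>n. a * x n + b * y n) = a * BL F w x + b * BL F w y"
    using BL_tendsto[OF Fb ult] tendsto_unique[OF Fb] by blast
next
  fix x :: "nat \<Rightarrow> real" assume x: "Bseq x" and nn: "\<forall>n. 0 \<le> x n"
  have "\<And>p. 0 \<le> avg x (w p) (Suc p)" using nn by (simp add: avg_def sum_nonneg)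
  then show "0 \<le> BL F w x"
    using tendsto_lowerbound[OF BL_tendsto[OF Fb ult x] _ Fb] by simp
next
  fix x :: "nat \<Rightarrow> real" assume x: "Bseq x"
  obtain B where B: "\<forall>n. \<bar>x n\<bar> \<le> B" using Bseq_abs_bound[OF x] by blast
  have xs: "Bseq (\<lambda>n. x (Suc n))" using x by (simp add: Bseq_Suc_iff)
  have "(\<lambda>p. 2 * B / real (Suc p)) \<longlonglongrightarrow> 0"
    using LIMSEQ_Suc[OF lim_const_over_n[of "2 * B"]] by simp
  then have z: "((\<lambda>p. avg (\<lambda>n. x (Suc n)) (w p) (Suc p) - avg x (w p) (Suc p)) \<longlongrightarrow> 0) sequentially"
  proof (rule Lim_null_comparison[rotated])
    show "\<forall>\<^sub>F p in sequentially. norm (avg (\<lambda>n. x (Suc n)) (w p) (Suc p) - avg x (w p) (Suc p)) \<le> 2 * B / real (Suc p)"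
    proof (intro always_eventually allI)
      fix p
      have "\<bar>x (w p + Suc p) - x (w p)\<bar> \<le> 2 * B" using B[rule_format, of "w p + Suc p"] B[rule_format, of "w p"] by linarith
      then show "norm (avg (\<lambda>n. x (Suc n)) (w p) (Suc p) - avg x (w p) (Suc p)) \<le> 2 * B / real (Suc p)"
        by (subst avg_shift) (auto simp: abs_divide divide_right_mono)
    qed
  qed
  have "((\<lambda>p. avg (\<lambda>n. x (Suc n)) (w p) (Suc p) - avg x (w p) (Suc p)) \<longlongrightarrow> 0) F"
    using tendsto_mono[OF Fs z] .
  moreover have "((\<lambda>p. avg (\<lambda>n. x (Suc n)) (w p) (Suc p) - avg x (w p) (Suc p)) \<longlongrightarrow> BL F w (\<lambda>n. x (Suc n)) - BL F w x) F"
    by (intro tendsto_diff BL_tendsto[OF Fb ult] x xs)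
  ultimately show "BL F w (\<lambda>n. x (Suc n)) = BL F w x"
    using tendsto_unique[OF Fb] by fastforce
next
  have "((\<lambda>p. avg (\<lambda>n. 1) (w p) (Suc p)) \<longlongrightarrow> 1) F" by (simp add: avg_def)
  then show "BL F w (\<lambda>n. 1) = 1" unfolding BL_def using Fb by (simp add: tendsto_Lim)
qed

lemma bl_lin: "banach_limit L \<Longrightarrow> Bseq x \<Longrightarrow> Bseq y \<Longrightarrow> L (\<lambda>n. a * x n + b * y n) = a * L x + b * L y"
  unfolding banach_limit_def by blast
lemma bl_pos: "banach_limit L \<Longrightarrow> Bseq x \<Longrightarrow> (\<And>n. x n \<ge> 0) \<Longrightarrow> L x \<ge> 0"
  unfolding banach_limit_def by blast
lemma bl_shift: "banach_limit L \<Longrightarrow> Bseq x \<Longrightarrow> L (\<lambda>n. x (Suc n)) = L x"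
  unfolding banach_limit_def by blast
lemma bl_one: "banach_limit L \<Longrightarrow> L (\<lambda>n. 1) = 1"
  unfolding banach_limit_def by blast

lemma bl_add: "banach_limit L \<Longrightarrow> Bseq x \<Longrightarrow> Bseq y \<Longrightarrow> L (\<lambda>n. x n + y n) = L x + L y"
  using bl_lin[of L x y 1 1] by simp

lemma bl_scale: "banach_limit L \<Longrightarrow> Bseq x \<Longrightarrow> L (\<lambda>n. c * x n) = c * L x"
  using bl_lin[of L x x c 0] by simp

lemma bl_shift_iter: "banach_limit L \<Longrightarrow> Bseq x \<Longrightarrow> L (\<lambda>n. x (n + i)) = L x"
proof (induction i)
  case 0 then show ?case by simp
next
  case (Suc i)
  have "Bseq (\<lambda>n. x (n + i))" using Suc.prems(2) by (rule Bseq_ignore_initial_segment)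
  from bl_shift[OF Suc.prems(1) this] Suc show ?case by simp
qed

lemma bl_window_sum: "banach_limit L \<Longrightarrow> Bseq x \<Longrightarrow> L (\<lambda>n. \<Sum>i<m. x (n + i)) = real m * L x
   \<and> Bseq (\<lambda>n. \<Sum>i<m. x (n + i))"
proof (induction m)
  case 0
  have "L (\<lambda>n. 0) = 0" using bl_scale[OF 0(1), of "\<lambda>n. 1" 0] by (simp add: Bseq_def)
  moreover have "Bseq (\<lambda>n. 0::real)" by (simp add: Bseq_def)
  ultimately show ?case by simp
next
  case (Suc m)
  have b: "Bseq (\<lambda>n. x (n + m))" using Suc.prems by (intro Bseq_ignore_initial_segment)
  have IH: "L (\<lambda>n. \<Sum>i<m. x (n + i)) = real m * L x" "Bseq (\<lambda>n. \<Sum>i<m. x (n + i))" using Suc by auto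
  have "L (\<lambda>n. \<Sum>i<Suc m. x (n + i)) = L (\<lambda>n. (\<Sum>i<m. x (n + i)) + x (n + m))" by simp
  also have "\<dots> = real m * L x + L x" using bl_add[OF Suc.prems(1) IH(2) b] IH(1) bl_shift_iter[OF Suc.prems] by simp
  finally have "L (\<lambda>n. \<Sum>i<Suc m. x (n + i)) = real (Suc m) * L x" by (simp add: algebra_simps)
  moreover have "Bseq (\<lambda>n. \<Sum>i<Suc m. x (n + i))" using Bseq_lin[OF IH(2) b, of 1 1] by simp
  ultimately show ?case by blast
qed

lemma bl_avg: assumes L: "banach_limit L" and x: "Bseq x" and m: "m > 0"
  shows "L (\<lambda>n. avg x n m) = L x" "Bseq (\<lambda>n. avg x n m)"
proof -
  have *: "(\<lambda>n. avg x n m) = (\<lambda>n. (1 / real m) * (\<Sum>i<m. x (n + i)))"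
    by (simp add: avg_def add.commute)
  from bl_window_sum[OF L x, of m] have e: "L (\<lambda>n. \<Sum>i<m. x (n + i)) = real m * L x" and b: "Bseq (\<lambda>n. \<Sum>i<m. x (n + i))"
    by auto
  have "L (\<lambda>n. (1 / real m) * (\<Sum>i<m. x (n + i))) = (1 / real m) * (real m * L x)"
    using bl_scale[OF L b, of "1 / real m"] e by simp
  then show "L (\<lambda>n. avg x n m) = L x" unfolding * using m by simp
  show "Bseq (\<lambda>n. avg x n m)" unfolding * using Bseq_lin[OF b b, of "1 / real m" 0] by simp
qed

lemma bl_lower: assumes L: "banach_limit L" and x: "Bseq x" and c: "\<And>n. x n \<ge> c"
  shows "L x \<ge> c"
proof -
  have one: "Bseq (\<lambda>n. 1::real)" by (simp add: Bseq_def)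
  have "L (\<lambda>n. 1 * x n + (- c) * 1) \<ge> 0" using c by (intro bl_pos[OF L] Bseq_lin x one) auto
  then show ?thesis using bl_lin[OF L x one, of 1 "-c"] bl_one[OF L] by simp
qed

lemma bl_upper: assumes L: "banach_limit L" and x: "Bseq x" and c: "\<And>n. x n \<le> c"
  shows "L x \<le> c"
proof -
  have "L (\<lambda>n. (-1) * x n) \<ge> -c" using c by (intro bl_lower[OF L]) (auto simp: Bseq_minus_iff x)
  then show ?thesis using bl_scale[OF L x, of "-1"] by simp
qed

lemma space_mu: "space mu = {x. \<forall>n. x n \<in> {-1/2<..<1/2}}"
  by (auto simp: mu_def space_PiM unif_half_def space_restrict_space PiE_def Pi_def extensional_def)

lemma space_mu_Bseq: "x \<in> space mu \<Longrightarrow> Bseq x"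
proof (intro BseqI'[of _ "1/2"])
  fix n assume "x \<in> space mu"
  then have "x n \<in> {-1/2<..<1/2}" unfolding space_mu by blast
  then show "norm (x n) \<le> 1/2" by auto
qed

definition G :: "(nat \<Rightarrow> real) set" where
  "G = {x \<in> space mu. \<forall>k::nat. \<exists>p::nat. \<forall>n n'. avg x n (Suc p) - avg x n' (Suc p) \<le> 1 / real (Suc k)}"

lemma eq_from_small:
  fixes a b :: real
  assumes "\<And>k::nat. \<bar>a - b\<bar> \<le> 2 / real (Suc k)"
  shows "a = b"
proof (rule ccontr)
  assume "a \<noteq> b"
  then have "\<bar>a - b\<bar> / 2 > 0" by simp
  then obtain k where k: "inverse (real (Suc k)) < \<bar>a - b\<bar> / 2" using reals_Archimedean by blast
  have "\<bar>a - b\<bar> \<le> 2 / real (Suc k)" by (rule assms)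
  with k show False by (simp add: field_simps)
qed

lemma bl_near:
  assumes L: "banach_limit L" and x: "x \<in> G"
  shows "\<exists>p. \<bar>L x - avg x 0 (Suc p)\<bar> \<le> 1 / real (Suc k)"
proof -
  from x obtain p where p: "\<And>n n'. avg x n (Suc p) - avg x n' (Suc p) \<le> 1 / real (Suc k)"
    unfolding G_def by blast
  have xb: "Bseq x" using x unfolding G_def by (auto intro: space_mu_Bseq)
  note a = bl_avg[OF L xb, of "Suc p", simplified]
  have "L (\<lambda>n. avg x n (Suc p)) \<le> avg x 0 (Suc p) + 1 / real (Suc k)"
    using p[of _ 0] by (intro bl_upper[OF L a(2)]) (simp add: algebra_simps)
  moreover have "L (\<lambda>n. avg x n (Suc p)) \<ge> avg x 0 (Suc p) - 1 / real (Suc k)"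
    using p[of 0] by (intro bl_lower[OF L a(2)]) (simp add: algebra_simps)
  ultimately show ?thesis using a(1) by (intro exI[of _ p]) simp
qed

lemma G_sub: "G \<subseteq> c_hat"
proof
  fix x assume x: "x \<in> G"
  have xb: "Bseq x" using x unfolding G_def by (auto intro: space_mu_Bseq)
  obtain F :: "nat filter" where F: "F \<noteq> bot" "F \<le> sequentially" "\<forall>P. eventually P F \<or> eventually (\<lambda>x. \<not> P x) F"
    using ex_ultra by blast
  define L0 where "L0 = BL F (\<lambda>_. 0)"
  have L0: "banach_limit L0" unfolding L0_def using F by (intro BL_banach) auto
  have "L x = L0 x" if L: "banach_limit L" for L
  proof (rule eq_from_small)
    fix k :: nat
    obtain p where p: "\<And>n n'. avg x n (Suc p) - avg x n' (Suc p) \<le> 1 / real (Suc k)"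
      using x unfolding G_def by blast
    have "\<bar>L' x - avg x 0 (Suc p)\<bar> \<le> 1 / real (Suc k)" if L': "banach_limit L'" for L'
    proof -
      note a = bl_avg[OF L' xb, of "Suc p", simplified]
      have "L' (\<lambda>n. avg x n (Suc p)) \<le> avg x 0 (Suc p) + 1 / real (Suc k)"
        using p[of _ 0] by (intro bl_upper[OF L' a(2)]) (simp add: algebra_simps)
      moreover have "L' (\<lambda>n. avg x n (Suc p)) \<ge> avg x 0 (Suc p) - 1 / real (Suc k)"
        using p[of 0] by (intro bl_lower[OF L' a(2)]) (simp add: algebra_simps)
      ultimately show ?thesis using a(1) by simp
    qed
    from this[OF L] this[OF L0] show "\<bar>L x - L0 x\<bar> \<le> 2 / real (Suc k)" by simp
  qed
  then show "x \<in> c_hat" unfolding c_hat_def using xb by blast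
qed

lemma c_hat_sub: "c_hat \<inter> space mu \<subseteq> G"
proof
  fix x assume x: "x \<in> c_hat \<inter> space mu"
  have xb: "Bseq x" using x by (auto intro: space_mu_Bseq)
  from x obtain s where s: "\<And>L. banach_limit L \<Longrightarrow> L x = s" unfolding c_hat_def by blast
  show "x \<in> G"
  proof (rule ccontr)
    assume "x \<notin> G"
    then obtain k where k: "\<forall>p. \<exists>n n'. avg x n (Suc p) - avg x n' (Suc p) > 1 / real (Suc k)"
      using x unfolding G_def by (auto simp: not_le)
    then obtain w w' where w: "\<And>p. avg x (w p) (Suc p) - avg x (w' p) (Suc p) > 1 / real (Suc k)"
      by metis
    obtain F :: "nat filter" where F: "F \<noteq> bot" "F \<le> sequentially" "\<forall>P. eventually P F \<or> eventually (\<lambda>x. \<not> P x) F"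
      using ex_ultra by blast
    have b1: "banach_limit (BL F w)" "banach_limit (BL F w')" using F by (auto intro: BL_banach)
    have "((\<lambda>p. avg x (w p) (Suc p) - avg x (w' p) (Suc p)) \<longlongrightarrow> BL F w x - BL F w' x) F"
      by (intro tendsto_diff BL_tendsto F xb)
    then have "BL F w x - BL F w' x \<ge> 1 / real (Suc k)"
      using w F(1) by (intro tendsto_lowerbound) (auto intro: less_imp_le always_eventually)
    moreover have "BL F w x = s" "BL F w' x = s" using s b1 by auto
    ultimately show False by simp
  qed
qed

lemma c_hat_eq: "c_hat \<inter> space mu = G"
  using c_hat_sub G_sub unfolding G_def by blast

lemma sets_unif_half: "sets unif_half = sets (restrict_space borel {-1/2<..<1/2::real})"
  unfolding unif_half_def by (simp add: sets_restrict_space)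

lemma space_unif_half: "space unif_half = {-1/2<..<1/2}"
  unfolding unif_half_def by (simp add: space_restrict_space)

lemma emeasure_unif_half: "A \<in> sets lborel \<Longrightarrow> A \<subseteq> {-1/2<..<1/2} \<Longrightarrow> emeasure unif_half A = emeasure lborel A"
  unfolding unif_half_def by (subst emeasure_restrict_space) auto

lemma prob_unif_half: "prob_space unif_half"
  unfolding unif_half_def by (rule prob_space_restrict_space) auto

interpretation UH: prob_space unif_half by (rule prob_unif_half)

interpretation PP: product_prob_space "\<lambda>_. unif_half" UNIV
  by unfold_locales

lemma mu_PP: "mu = PiM UNIV (\<lambda>_. unif_half)" by (simp add: mu_def)

interpretation MU: prob_space mu unfolding mu_def by (rule PP.P.prob_space_axioms)

lemma unif_half_interval:
  assumes "-1/2 \<le> a" "a \<le> b" "b \<le> 1/2"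
  shows "{a<..<b} \<in> sets unif_half" "measure unif_half {a<..<b} = b - a"
proof -
  show "{a<..<b} \<in> sets unif_half" using assms unfolding sets_unif_half
    by (auto simp: sets_restrict_space_iff)
  have "emeasure unif_half {a<..<b} = ennreal (b - a)"
    using assms by (subst emeasure_unif_half) auto
  then show "measure unif_half {a<..<b} = b - a" using assms by (simp add: measure_def)
qed

lemma indep_coord: "MU.indep_vars (\<lambda>_. unif_half) (\<lambda>i x. x i) UNIV"
proof -
  have "MU.indep_vars (\<lambda>_. unif_half) (\<lambda>i x. x i) UNIV \<longleftrightarrow>
    distr mu (\<Pi>\<^sub>M i\<in>UNIV. unif_half) (\<lambda>x. \<lambda>i\<in>UNIV. x i) = (\<Pi>\<^sub>M i\<in>UNIV. distr mu unif_half (\<lambda>x. x i))"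
    by (rule MU.indep_vars_iff_distr_eq_PiM) (auto simp: mu_def)
  moreover have "distr mu unif_half (\<lambda>x. x i) = unif_half" for i
    unfolding mu_def by (rule PP.PiM_component) simp
  moreover have "distr mu (\<Pi>\<^sub>M i\<in>UNIV. unif_half) (\<lambda>x. \<lambda>i\<in>UNIV. x i) = mu"
  proof -
    have "distr mu (\<Pi>\<^sub>M i\<in>UNIV. unif_half) (\<lambda>x. \<lambda>i\<in>UNIV. x i) = distr mu mu (\<lambda>x. x)"
      by (intro distr_cong) (auto simp: mu_def space_PiM)
    then show ?thesis by (simp add: mu_def)
  qed
  ultimately show ?thesis by (simp add: mu_def)
qed

lemma id_uh_meas[measurable]: "(\<lambda>x. x) \<in> borel_measurable unif_half"
  unfolding unif_half_def by (rule measurable_restrict_space1) simp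

lemma coord_meas[measurable]: "(\<lambda>x. x i) \<in> borel_measurable mu"
  unfolding mu_def
  using measurable_compose[OF measurable_component_singleton[of i UNIV "\<lambda>_. unif_half"] id_uh_meas] by simp

lemma avg_meas[measurable]: "(\<lambda>x. avg x n m) \<in> borel_measurable mu"
  unfolding avg_def by measurable

lemma G_meas: "G \<in> sets mu"
  unfolding G_def by measurable

lemma disj_blocks: fixes p :: nat shows "disjoint_family_on (\<lambda>j. {j * p..<j * p + p}) UNIV"
  unfolding disjoint_family_on_def
proof (intro ballI impI)
  fix j j' :: nat assume "j \<noteq> j'"
  have *: "{j * p..<j * p + p} \<inter> {j' * p..<j' * p + p} = {}" if "j < j'" for j j' :: nat
  proof -
    have "Suc j * p \<le> j' * p" using that by (intro mult_le_mono1) simp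
    then show ?thesis by auto
  qed
  show "{j * p..<j * p + p} \<inter> {j' * p..<j' * p + p} = {}"
    using *[of j j'] *[of j' j] \<open>j \<noteq> j'\<close> by (cases "j < j'") (auto simp: Int_commute)
qed

lemma box_prob:
  assumes K: "finite K" and B: "B \<in> sets unif_half"
  shows "MU.prob {x \<in> space mu. \<forall>i\<in>K. x i \<in> B} = measure unif_half B ^ card K"
proof -
  have "emeasure mu {x \<in> space mu. \<forall>i\<in>K. x i \<in> B} = (\<Prod>i\<in>K. emeasure unif_half B)"
    unfolding mu_def using K B by (intro PP.emeasure_PiM_Collect) auto
  also have "\<dots> = ennreal (measure unif_half B ^ card K)"
    by (simp add: UH.emeasure_eq_measure prod_ennreal ennreal_power)
  finally show ?thesis by (simp add: MU.emeasure_eq_measure)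
qed

lemma window_AE:
  fixes a b :: real and p :: nat
  assumes ab: "-1/2 \<le> a" "a < b" "b \<le> 1/2" and p: "p > 0"
  shows "AE x in mu. \<exists>n. \<forall>i<p. x (n + i) \<in> {a<..<b}"
proof -
  define B where "B = {a<..<b}"
  define q where "q = b - a"
  have Bs: "B \<in> sets unif_half" and mB: "measure unif_half B = q"
    using unif_half_interval[of a b] ab unfolding B_def q_def by auto
  define K where "K j = {j * p..<j * p + p}" for j
  define Y where "Y j x = restrict (\<lambda>i. x i) (K j)" for j and x :: "nat \<Rightarrow> real"
  define A where "A j = space (PiM (K j) (\<lambda>_. unif_half)) - PiE (K j) (\<lambda>_. B)" for j
  have ind: "MU.indep_vars (\<lambda>j. PiM (K j) (\<lambda>_. unif_half)) Y UNIV"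
    unfolding Y_def K_def by (rule MU.indep_vars_restrict[OF indep_coord]) (auto simp: disj_blocks)
  have As: "A j \<in> sets (PiM (K j) (\<lambda>_. unif_half))" for j
    unfolding A_def K_def using Bs by (intro sets.compl_sets sets_PiM_I_finite) auto
  have pre: "Y j -` A j \<inter> space mu = space mu - {x \<in> space mu. \<forall>i\<in>K j. x i \<in> B}" for j
    unfolding Y_def A_def by (auto simp: space_PiM mu_def PiE_iff)
  have Cm: "{x \<in> space mu. \<forall>i\<in>K j. x i \<in> B} \<in> sets mu" for j
    unfolding B_def K_def by measurable
  have ev: "(\<Inter>j\<in>{..J}. Y j -` A j \<inter> space mu) \<in> sets mu" for J
    by (rule sets.finite_INT) (auto simp: pre Cm)
  have pj: "MU.prob (Y j -` A j \<inter> space mu) = 1 - q ^ p" for j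
  proof -
    have "{x \<in> space mu. \<forall>i\<in>K j. x i \<in> B} \<in> sets mu"
      unfolding B_def K_def by measurable
    then show ?thesis
      unfolding pre using box_prob[of "K j" B] Bs mB by (simp add: MU.prob_compl K_def)
  qed
  define N where "N = {x \<in> space mu. \<forall>n. \<exists>i<p. x (n + i) \<notin> B}"
  have Nm: "N \<in> sets mu" unfolding N_def B_def by measurable
  have NJ: "MU.prob N \<le> (1 - q ^ p) ^ Suc J" for J
  proof -
    have "N \<subseteq> (\<Inter>j\<in>{..J}. Y j -` A j \<inter> space mu)"
    proof
      fix x assume x: "x \<in> N"
      show "x \<in> (\<Inter>j\<in>{..J}. Y j -` A j \<inter> space mu)"
      proof (intro INT_I)
        fix j
        from x obtain i where i: "i < p" "x (j * p + i) \<notin> B" unfolding N_def by blast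
        then have "\<not> (\<forall>i\<in>K j. x i \<in> B)" unfolding K_def by force
        then show "x \<in> Y j -` A j \<inter> space mu" unfolding pre using x N_def by blast
      qed
    qed
    then have "MU.prob N \<le> MU.prob (\<Inter>j\<in>{..J}. Y j -` A j \<inter> space mu)"
      by (rule MU.finite_measure_mono[OF _ ev])
    also have "\<dots> = (\<Prod>j\<in>{..J}. MU.prob (Y j -` A j \<inter> space mu))"
      by (rule MU.indep_varsD[OF ind]) (auto simp: As)
    also have "\<dots> = (1 - q ^ p) ^ Suc J" by (simp add: pj)
    finally show ?thesis .
  qed
  have q: "0 < q" "q \<le> 1" using ab unfolding q_def by auto
  have "0 < q ^ p" "q ^ p \<le> 1" using q by (auto simp: power_le_one)
  then have "(\<lambda>J. (1 - q ^ p) ^ J) \<longlonglongrightarrow> 0" by (intro LIMSEQ_power_zero) auto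
  then have "(\<lambda>J. (1 - q ^ p) ^ Suc J) \<longlonglongrightarrow> 0" by (rule LIMSEQ_Suc)
  then have "MU.prob N \<le> 0" using NJ by (intro LIMSEQ_le_const) auto
  then have "N \<in> null_sets mu" using Nm by (simp add: MU.emeasure_eq_measure null_sets_def measure_nonneg antisym)
  then have "AE x in mu. x \<notin> N" by (rule AE_not_in)
  with AE_space show ?thesis by eventually_elim (auto simp: N_def B_def)
qed

lemma avg_gt:
  assumes "m > 0" "\<And>i. i < m \<Longrightarrow> x (n + i) > c"
  shows "avg x n m > c"
proof -
  have "(\<Sum>i<m. c) < (\<Sum>i<m. x (n + i))" using assms by (intro sum_strict_mono) auto
  then show ?thesis using assms(1) by (simp add: avg_def field_simps)
qed

lemma avg_lt:
  assumes "m > 0" "\<And>i. i < m \<Longrightarrow> x (n + i) < c"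
  shows "avg x n m < c"
proof -
  have "(\<Sum>i<m. x (n + i)) < (\<Sum>i<m. c)" using assms by (intro sum_strict_mono) auto
  then show ?thesis using assms(1) by (simp add: avg_def field_simps)
qed

lemma key:
  assumes elim: "\<forall>p. (\<exists>n. \<forall>i<Suc p. x (n + i) \<in> {1/4<..<1/2}) \<and> (\<exists>n. \<forall>i<Suc p. x (n + i) \<in> {-1/2<..<-1/4})"
  shows "x \<notin> G"
proof
  assume "x \<in> G"
  then have "x \<in> space mu \<and> (\<forall>k::nat. \<exists>p::nat. \<forall>n n'. avg x n (Suc p) - avg x n' (Suc p) \<le> 1 / real (Suc k))"
    unfolding G_def by (rule CollectD)
  then have all: "\<forall>k::nat. \<exists>p::nat. \<forall>n n'. avg x n (Suc p) - avg x n' (Suc p) \<le> 1 / real (Suc k)"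
    by (rule conjunct2)
  from spec[OF all, of 1] obtain p where p: "\<And>n n'. avg x n (Suc p) - avg x n' (Suc p) \<le> 1 / real (Suc 1)"
    by blast
  from elim[rule_format, of p] obtain n n' where n: "\<forall>i<Suc p. x (n + i) \<in> {1/4<..<1/2}" and n': "\<forall>i<Suc p. x (n' + i) \<in> {-1/2<..<-1/4}"
    by (elim conjE exE)
  have "avg x n (Suc p) > 1/4" using n by (intro avg_gt) auto
  moreover have "avg x n' (Suc p) < -1/4" using n' by (intro avg_lt) auto
  moreover have "avg x n (Suc p) - avg x n' (Suc p) \<le> 1/2" using p[of n n'] by simp
  ultimately show False by linarith
qed

lemma G_null: "measure mu G = 0"
proof -
  have "AE x in mu. \<forall>p. (\<exists>n. \<forall>i<Suc p. x (n + i) \<in> {1/4<..<1/2}) \<and> (\<exists>n. \<forall>i<Suc p. x (n + i) \<in> {-1/2<..<-1/4})"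
  proof (intro AE_all_countable[THEN iffD2] allI AE_conjI)
    fix p :: nat
    show "AE x in mu. \<exists>n. \<forall>i<Suc p. x (n + i) \<in> {1/4<..<1/2}"
      by (rule window_AE) simp_all
    show "AE x in mu. \<exists>n. \<forall>i<Suc p. x (n + i) \<in> {-1/2<..<-1/4}"
      by (rule window_AE) simp_all
  qed
  then have ae: "AE x in mu. x \<notin> G" using key by (rule eventually_mono)
  have eq: "{x \<in> space mu. \<not> x \<notin> G} = G" using G_meas[THEN sets.sets_into_space] by auto
  have "emeasure mu G = 0" using AE_iff_measurable[where P="\<lambda>x. x \<notin> G", OF G_meas eq] ae by simp
  then show ?thesis by (simp add: measure_def)
qed

lemma integral_uh: "integral\<^sup>L unif_half (\<lambda>y. y) = 0"
proof -
  define S :: "real set" where "S = {-1/2<..<1/2}"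
  define I where "I = integral\<^sup>L lborel (\<lambda>x. indicator S x *\<^sub>R x)"
  have "integral\<^sup>L unif_half (\<lambda>y. y) = I"
    unfolding unif_half_def I_def S_def by (subst integral_restrict_space) auto
  moreover have "I = 0"
  proof -
    have eq: "(\<lambda>x. indicator S (0 + -1 * x) *\<^sub>R (0 + -1 * x)) = (\<lambda>x. - (indicator S x *\<^sub>R x))"
      by (auto simp: S_def indicator_def fun_eq_iff)
    have "I = \<bar>-1\<bar> *\<^sub>R integral\<^sup>L lborel (\<lambda>x. indicator S (0 + -1 * x) *\<^sub>R (0 + -1 * x))"
      unfolding I_def by (rule lborel_integral_real_affine) simp
    also have "\<dots> = integral\<^sup>L lborel (\<lambda>x. indicator S (0 + -1 * x) *\<^sub>R (0 + -1 * x))"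
      by simp
    also have "\<dots> = integral\<^sup>L lborel (\<lambda>x. - (indicator S x *\<^sub>R x))"
      by (simp only: eq)
    also have "\<dots> = - I" unfolding I_def by (rule integral_minus)
    finally show "I = 0" by simp
  qed
  ultimately show ?thesis by simp
qed

lemma expect_coord: "integral\<^sup>L mu (\<lambda>x. x i) = 0"
proof -
  have "integral\<^sup>L mu (\<lambda>x. x i) = integral\<^sup>L (distr mu unif_half (\<lambda>x. x i)) (\<lambda>y. y)"
    by (rule integral_distr[symmetric]) (auto simp: mu_def)
  also have "distr mu unif_half (\<lambda>x. x i) = unif_half"
    unfolding mu_def by (rule PP.PiM_component) simp
  finally show ?thesis using integral_uh by simp
qed

lemma indep_borel: "MU.indep_vars (\<lambda>_. borel) (\<lambda>i x. x i) I"
proof -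
  have "MU.indep_vars (\<lambda>_. borel) (\<lambda>i x. (\<lambda>y. y) (x i)) UNIV"
    by (rule MU.indep_vars_compose2[OF indep_coord]) simp
  then show ?thesis using MU.indep_vars_subset by fastforce
qed

lemma hoeff:
  assumes n: "n > 0" and e: "e \<ge> 0"
  shows "MU.prob {x \<in> space mu. \<bar>\<Sum>i<n. x i\<bar> \<ge> real n * e} \<le> 2 * exp (-2 * e\<^sup>2) ^ n"
proof -
  interpret H: Hoeffding_ineq mu "{..<n}" "\<lambda>i x. x i" "\<lambda>_. -1/2" "\<lambda>_. 1/2" 0
  proof unfold_locales
    show "MU.indep_vars (\<lambda>_. borel) (\<lambda>i x. x i) {..<n}" by (rule indep_borel)
    fix i
    show "AE x in mu. x i \<in> {- 1 / 2..1 / 2}"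
      using AE_space
    proof eventually_elim
      case (elim x)
      then have "x i \<in> {-1/2<..<1/2}" by (simp add: space_mu)
      then show ?case by auto
    qed
  qed (auto simp: expect_coord)
  have "MU.prob {x \<in> space mu. \<bar>(\<Sum>i<n. x i) - 0\<bar> \<ge> real n * e}
      \<le> 2 * exp (-2 * (real n * e)\<^sup>2 / (\<Sum>i<n. (1/2 - -1/2)\<^sup>2))"
    using n e by (intro H.Hoeffding_ineq_abs_ge) auto
  also have "-2 * (real n * e)\<^sup>2 / (\<Sum>i<n. (1/2 - -1/2::real)\<^sup>2) = real n * (-2 * e\<^sup>2)"
    using n by (simp add: power2_eq_square field_simps)
  also have "exp (real n * (-2 * e\<^sup>2)) = exp (-2 * e\<^sup>2) ^ n"
    by (rule exp_of_nat_mult)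
  finally show ?thesis by simp
qed

lemma AE_avg_small:
  assumes e: "e > 0"
  shows "AE x in mu. eventually (\<lambda>n. \<bar>\<Sum>i<n. x i\<bar> < real n * e) sequentially"
proof -
  define A where "A n = {x \<in> space mu. \<bar>\<Sum>i<n. x i\<bar> \<ge> real n * e}" for n
  have Am: "A n \<in> sets mu" for n unfolding A_def by measurable
  have bd: "MU.prob (A n) \<le> 2 * exp (-2 * e\<^sup>2) ^ n" for n
  proof (cases "n = 0")
    case True
    have p1: "MU.prob (A n) \<le> 1" by (rule MU.prob_le_1)
    have "2 * exp (-2 * e\<^sup>2) ^ n = 2" using True by simp
    with p1 show ?thesis by linarith
  next
    case False then show ?thesis unfolding A_def using hoeff e by auto
  qed
  have "summable (\<lambda>n. 2 * exp (-2 * e\<^sup>2) ^ n)"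
    using e by (intro summable_mult summable_geometric) (simp add: power2_eq_square)
  then have "summable (\<lambda>n. MU.prob (A n))"
    by (rule summable_comparison_test'[where N=0]) (use bd in auto)
  then have "AE x in mu. eventually (\<lambda>n. x \<in> space mu - A n) sequentially"
    by (intro borel_cantelli_AE1 Am) (auto simp: MU.emeasure_eq_measure)
  then show ?thesis by eventually_elim (auto elim!: eventually_mono simp: A_def not_le)
qed

definition S0' where "S0' = {x \<in> space mu. \<forall>k::nat. \<exists>N. \<forall>n\<ge>N. \<bar>(\<Sum>i<n. x i) / real n\<bar> < 1 / real (Suc k)}"

lemma S0_eq: "S0 \<inter> space mu = S0'"
proof -
  have "((\<lambda>n. (\<Sum>i<n. x i) / real n) \<longlonglongrightarrow> 0) \<longleftrightarrow> (\<forall>k::nat. \<exists>N. \<forall>n\<ge>N. \<bar>(\<Sum>i<n. x i) / real n\<bar> < 1 / real (Suc k))" for x :: "nat \<Rightarrow> real"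
  proof
    assume "(\<lambda>n. (\<Sum>i<n. x i) / real n) \<longlonglongrightarrow> 0"
    then show "\<forall>k::nat. \<exists>N. \<forall>n\<ge>N. \<bar>(\<Sum>i<n. x i) / real n\<bar> < 1 / real (Suc k)"
      unfolding LIMSEQ_iff by auto
  next
    assume a: "\<forall>k::nat. \<exists>N. \<forall>n\<ge>N. \<bar>(\<Sum>i<n. x i) / real n\<bar> < 1 / real (Suc k)"
    show "(\<lambda>n. (\<Sum>i<n. x i) / real n) \<longlonglongrightarrow> 0"
      unfolding LIMSEQ_iff
    proof (intro allI impI)
      fix r :: real assume "r > 0"
      then obtain k where k: "inverse (real (Suc k)) < r" using reals_Archimedean by blast
      from a obtain N where N: "\<forall>n\<ge>N. \<bar>(\<Sum>i<n. x i) / real n\<bar> < 1 / real (Suc k)" by blast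
      have k': "1 / real (Suc k) < r" using k by (simp add: inverse_eq_divide)
      have "norm ((\<Sum>i<n. x i) / real n - 0) < r" if "n \<ge> N" for n
        using N that k' by (metis real_norm_def diff_zero less_trans)
      then show "\<exists>no. \<forall>n\<ge>no. norm ((\<Sum>i<n. x i) / real n - 0) < r" by blast
    qed
  qed
  then show ?thesis unfolding S0_def S0'_def using space_mu_Bseq by auto
qed

lemma S0'_meas: "S0' \<in> sets mu"
  unfolding S0'_def by measurable

lemma S0'_prob: "measure mu S0' = 1"
proof -
  have "AE x in mu. \<forall>k. eventually (\<lambda>n. \<bar>\<Sum>i<n. x i\<bar> < real n * (1 / real (Suc k))) sequentially"
    by (intro AE_all_countable[THEN iffD2] allI AE_avg_small) simp
  then have "AE x in mu. \<forall>k::nat. \<exists>N. \<forall>n\<ge>N. \<bar>(\<Sum>i<n. x i) / real n\<bar> < 1 / real (Suc k)"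
  proof eventually_elim
    case (elim x)
    show ?case
    proof
      fix k :: nat
      from elim[rule_format, of k] obtain N where N: "\<forall>n\<ge>N. \<bar>\<Sum>i<n. x i\<bar> < real n * (1 / real (Suc k))"
        unfolding eventually_sequentially by blast
      have "\<bar>(\<Sum>i<n. x i) / real n\<bar> < 1 / real (Suc k)" if "n \<ge> N" for n
      proof (cases "n = 0")
        case True then show ?thesis by simp
      next
        case False
        then have "real n > 0" by simp
        with N that show ?thesis by (simp add: abs_divide divide_less_eq mult.commute)
      qed
      then show "\<exists>N. \<forall>n\<ge>N. \<bar>(\<Sum>i<n. x i) / real n\<bar> < 1 / real (Suc k)" by blast
    qed
  qed
  then show ?thesis
    using MU.prob_Collect_eq_1[of "\<lambda>x. \<forall>k::nat. \<exists>N. \<forall>n\<ge>N. \<bar>(\<Sum>i<n. x i) / real n\<bar> < 1 / real (Suc k)"]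
      S0'_meas unfolding S0'_def by simp
qed

theorem theorem4p1:
  shows "(S0 \<inter> space mu \<in> sets mu \<and> measure mu (S0 \<inter> space mu) = 1) \<and>
         (c_hat \<inter> space mu \<in> sets mu \<and> measure mu (c_hat \<inter> space mu) = 0)"
  using S0'_meas S0'_prob G_meas G_null by (simp add: S0_eq c_hat_eq)

end
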